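(* There exists a strongly bilevel feasible $w$ that is optimal to the NPP, i.e. there exist $w$ strongly bilevel feasible and $t$ such that $(w,t)$ is an optimal solution of the conjugate bilevel program $\max_{w,t}\{w^\top t: w\ge0,\ t\in\mathbf{T}(w)\}$.
   Context: Single-commodity network pricing setting: $G=(\mathcal{V},\mathcal{A})$ directed graph, arc costs $c\ge0$, nonempty tolled arc set $\mathcal{A}_1\subsetneq\mathcal{A}$, $n=|\mathcal{A}_1|$, $N$ node–arc incidence matrix, single origin $o$ and destination $d$ connected by a toll-free path, $b_o=1$, $b_d=-1$, $b_i=0$ otherwise, $\mathcal{X}=\{x\in\mathbb{R}^{\mathcal{A}}: Nx=b,\ x\ge0\}$, $x_{\mathcal{A}_1}$ the restriction of $x$ to $\mathcal{A}_1$; tolls $t\in\mathbb{R}^n$ are extended by zeros to $\bar t\in\mathbb{R}^{\mathcal{A}}$. Let $f(t)=\min\{c^\top x+t^\top x_{\mathcal{A}_1}: x\in\mathcal{X}\}$ for $t\ge0$, $f(t)=-\infty$ otherwise, and $g(w)=\sup_{t\in\mathbb{R}^n}\{f(t)-t^\top w\}$. A vector $w\ge0$ is strongly bilevel feasible when $\{w\}$ is the projection onto $w$-space of a face of $\operatorname{epi}(g)$ whose affine hull's direction space does not contain $(0,1)$. For $w\ge0$, $\mathbf{T}(w)$ is the set of $t$ that are parts of optimal solutions $(t,y)$ of $\max_{t,y}\{b^\top y-w^\top t: N^\top y-\bar t\le c,\ t\ge0\}$. The NPP here is $\max_{t\ge0,x}\{t^\top x_{\mathcal{A}_1}: x\in\arg\min_{x'\in\mathcal{X}}(c^\top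 x'+t^\top x'_{\mathcal{A}_1})\}$, whose optimal value equals that of the conjugate bilevel program. *)

theory Defs
  imports "HOL-Analysis.Analysis"
begin

(* Tolled arcs are indexed by a finite type 'k via an injection
  tol :: 'k => 'e (so n = CARD('k) and A1 = range tol). *)

definition incidence :: "('e \<Rightarrow> 'v) \<Rightarrow> ('e \<Rightarrow> 'v) \<Rightarrow> 'v \<Rightarrow> 'e \<Rightarrow> real" where
  "incidence tl_of hd_of i a =
     (if tl_of a = i then 1 else 0) - (if hd_of a = i then 1 else 0)"

definition bvec :: "'v \<Rightarrow> 'v \<Rightarrow> 'v \<Rightarrow> real" where
  "bvec o' d i = (if i = o' then 1 else if i = d then -1 else 0)"

definition flows :: "('e::finite \<Rightarrow> 'v) \<Rightarrow> ('e \<Rightarrow> 'v) \<Rightarrow> 'v \<Rightarrow> 'v \<Rightarrow> ('e \<Rightarrow> real) set" where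
  "flows tl_of hd_of o' d =
     {x. (\<forall>i. (\<Sum>a\<in>UNIV. incidence tl_of hd_of i a * x a) = bvec o' d i) \<and> (\<forall>a. x a \<ge> 0)}"

definition restr :: "('k \<Rightarrow> 'e) \<Rightarrow> ('e \<Rightarrow> real) \<Rightarrow> real^'k" where
  "restr tol x = (\<chi> k. x (tol k))"

definition ext_toll :: "('k \<Rightarrow> 'e) \<Rightarrow> real^'k \<Rightarrow> 'e \<Rightarrow> real" where
  "ext_toll tol t a = (if a \<in> range tol then t $ (inv tol a) else 0)"

definition nonneg :: "real^'k \<Rightarrow> bool" where
  "nonneg t \<longleftrightarrow> (\<forall>k. t $ k \<ge> 0)"

definition fval :: "('e::finite \<Rightarrow> 'v) \<Rightarrow> ('e \<Rightarrow> 'v) \<Rightarrow> 'v \<Rightarrow> 'v \<Rightarrow> ('e \<Rightarrow> real)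
     \<Rightarrow> ('k \<Rightarrow> 'e) \<Rightarrow> real^'k \<Rightarrow> ereal" where
  "fval tl_of hd_of o' d c tol t =
     (if nonneg t then
        (INF x\<in>flows tl_of hd_of o' d. ereal ((\<Sum>a\<in>UNIV. c a * x a) + t \<bullet> restr tol x))
      else -\<infinity>)"

definition gval :: "('e::finite \<Rightarrow> 'v) \<Rightarrow> ('e \<Rightarrow> 'v) \<Rightarrow> 'v \<Rightarrow> 'v \<Rightarrow> ('e \<Rightarrow> real)
     \<Rightarrow> ('k \<Rightarrow> 'e) \<Rightarrow> real^'k \<Rightarrow> ereal" where
  "gval tl_of hd_of o' d c tol w =
     (SUP t\<in>UNIV. fval tl_of hd_of o' d c tol t - ereal (t \<bullet> w))"

definition epigraph :: "(real^'k \<Rightarrow> ereal) \<Rightarrow> ((real^'k) \<times> real) set" where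
  "epigraph g = {(w, \<mu>). g w \<le> ereal \<mu>}"

definition aff_direction :: "'a::real_vector set \<Rightarrow> 'a set" where
  "aff_direction F = {u - v | u v. u \<in> affine hull F \<and> v \<in> affine hull F}"

definition strongly_bilevel_feasible ::
  "('e::finite \<Rightarrow> 'v) \<Rightarrow> ('e \<Rightarrow> 'v) \<Rightarrow> 'v \<Rightarrow> 'v \<Rightarrow> ('e \<Rightarrow> real)
     \<Rightarrow> ('k::finite \<Rightarrow> 'e) \<Rightarrow> real^'k \<Rightarrow> bool" where
  "strongly_bilevel_feasible tl_of hd_of o' d c tol w \<longleftrightarrow>
     nonneg w \<and>
     (\<exists>F. F face_of epigraph (gval tl_of hd_of o' d c tol) \<and> fst ` F = {w} \<and>
          (0, 1) \<notin> aff_direction F)"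

definition dual_feasible :: "('e::finite \<Rightarrow> 'v::finite) \<Rightarrow> ('e \<Rightarrow> 'v) \<Rightarrow> ('e \<Rightarrow> real)
     \<Rightarrow> ('k \<Rightarrow> 'e) \<Rightarrow> real^'k \<Rightarrow> ('v \<Rightarrow> real) \<Rightarrow> bool" where
  "dual_feasible tl_of hd_of c tol t y \<longleftrightarrow>
     nonneg t \<and>
     (\<forall>a. (\<Sum>i\<in>UNIV. incidence tl_of hd_of i a * y i) - ext_toll tol t a \<le> c a)"

definition dual_obj :: "'v::finite \<Rightarrow> 'v \<Rightarrow> real^'k \<Rightarrow> real^'k \<Rightarrow> ('v \<Rightarrow> real) \<Rightarrow> real" where
  "dual_obj o' d w t y = (\<Sum>i\<in>UNIV. bvec o' d i * y i) - w \<bullet> t"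

definition Tset :: "('e::finite \<Rightarrow> 'v::finite) \<Rightarrow> ('e \<Rightarrow> 'v) \<Rightarrow> 'v \<Rightarrow> 'v \<Rightarrow> ('e \<Rightarrow> real)
     \<Rightarrow> ('k::finite \<Rightarrow> 'e) \<Rightarrow> real^'k \<Rightarrow> (real^'k) set" where
  "Tset tl_of hd_of o' d c tol w =
     {t. \<exists>y. dual_feasible tl_of hd_of c tol t y \<and>
            (\<forall>t' y'. dual_feasible tl_of hd_of c tol t' y' \<longrightarrow>
                     dual_obj o' d w t' y' \<le> dual_obj o' d w t y)}"

definition cbp_optimal :: "('e::finite \<Rightarrow> 'v::finite) \<Rightarrow> ('e \<Rightarrow> 'v) \<Rightarrow> 'v \<Rightarrow> 'v \<Rightarrow> ('e \<Rightarrow> real)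
     \<Rightarrow> ('k::finite \<Rightarrow> 'e) \<Rightarrow> real^'k \<Rightarrow> real^'k \<Rightarrow> bool" where
  "cbp_optimal tl_of hd_of o' d c tol w t \<longleftrightarrow>
     nonneg w \<and> t \<in> Tset tl_of hd_of o' d c tol w \<and>
     (\<forall>w' t'. nonneg w' \<and> t' \<in> Tset tl_of hd_of o' d c tol w' \<longrightarrow> w' \<bullet> t' \<le> w \<bullet> t)"

definition tollfree_path :: "('e \<Rightarrow> 'v) \<Rightarrow> ('e \<Rightarrow> 'v) \<Rightarrow> ('k \<Rightarrow> 'e) \<Rightarrow> 'v \<Rightarrow> 'v \<Rightarrow> bool" where
  "tollfree_path tl_of hd_of tol o' d \<longleftrightarrow>
     (o', d) \<in> {(tl_of a, hd_of a) | a. a \<notin> range tol}\<^sup>*"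

end

theory Submission imports Defs "Graph_Theory.Shortest_Path" begin

definition gr :: "('e \<Rightarrow> 'v) \<Rightarrow> ('e \<Rightarrow> 'v) \<Rightarrow> ('v,'e) pre_digraph" where
  "gr tl_of hd_of = \<lparr>verts = UNIV, arcs = UNIV, tail = tl_of, head = hd_of\<rparr>"

lemma gr_simps[simp]: "verts (gr t h) = UNIV" "arcs (gr t h) = UNIV" "tail (gr t h) = t" "head (gr t h) = h"
  by (simp_all add: gr_def)

lemma fin_gr: "fin_digraph (gr (tl_of::'e::finite \<Rightarrow> 'v::finite) hd_of)"
  by unfold_locales auto

lemma sum_incidence:
  fixes y :: "'v::finite \<Rightarrow> real"
  shows "(\<Sum>i\<in>UNIV. incidence tl_of hd_of i a * y i) = y (tl_of a) - y (hd_of a)"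
proof -
  have "(\<Sum>i\<in>UNIV. incidence tl_of hd_of i a * y i) = (\<Sum>i\<in>UNIV. (if tl_of a = i then y i else 0) - (if hd_of a = i then y i else 0))"
    by (rule sum.cong) (auto simp: incidence_def)
  then show ?thesis by (simp add: sum_subtractf)
qed

lemma sum_bvec:
  fixes y :: "'v::finite \<Rightarrow> real"
  assumes "o' \<noteq> d"
  shows "(\<Sum>i\<in>UNIV. bvec o' d i * y i) = y o' - y d"
proof -
  have "(\<Sum>i\<in>UNIV. bvec o' d i * y i) = (\<Sum>i\<in>UNIV. (if o' = i then y i else 0) - (if d = i then y i else 0))"
    by (rule sum.cong) (use assms in \<open>auto simp: bvec_def\<close>)
  then show ?thesis by (simp add: sum_subtractf)
qed

lemma sum_delta_add:
  fixes f g :: "'e::finite \<Rightarrow> real"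
  shows "(\<Sum>a\<in>UNIV. f a * (g a + (if e = a then 1 else 0))) = (\<Sum>a\<in>UNIV. f a * g a) + f e"
proof -
  have "(\<Sum>a\<in>UNIV. f a * (g a + (if e = a then 1 else 0))) = (\<Sum>a\<in>UNIV. f a * g a + (if e = a then f a else 0))"
    by (rule sum.cong) (auto simp: distrib_left)
  then show ?thesis by (simp add: sum.distrib)
qed

lemma ext_toll_nonneg: "nonneg t \<Longrightarrow> ext_toll tol t a \<ge> 0"
  by (simp add: ext_toll_def nonneg_def)

lemma sum_ext_toll:
  fixes x :: "'e::finite \<Rightarrow> real" and tol :: "'k::finite \<Rightarrow> 'e"
  assumes "inj tol"
  shows "(\<Sum>a\<in>UNIV. ext_toll tol t a * x a) = t \<bullet> restr tol x"
proof -
  have "(\<Sum>a\<in>UNIV. ext_toll tol t a * x a) = (\<Sum>a\<in>range tol. ext_toll tol t a * x a)"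
    by (rule sum.mono_neutral_right) (auto simp: ext_toll_def)
  also have "\<dots> = (\<Sum>k\<in>UNIV. ext_toll tol t (tol k) * x (tol k))"
    using assms by (simp add: sum.reindex)
  also have "\<dots> = t \<bullet> restr tol x"
    using assms by (simp add: ext_toll_def inner_vec_def restr_def)
  finally show ?thesis .
qed

lemma inner_sum: "(t::real^'k::finite) \<bullet> W = (\<Sum>k\<in>UNIV. t $ k * W $ k)"
  by (simp add: inner_vec_def)

lemma term_le_inner:
  fixes t W :: "real^'k::finite"
  assumes "nonneg t" "\<And>k. W $ k \<ge> 0"
  shows "t $ k * W $ k \<le> t \<bullet> W"
  unfolding inner_sum
  by (rule member_le_sum) (use assms in \<open>auto simp: nonneg_def\<close>)

lemma cap_inner:
  fixes t W :: "real^'k::finite"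
  assumes "\<And>k. W $ k \<noteq> 0 \<Longrightarrow> t $ k \<le> M"
  shows "(\<chi> k. min (t $ k) M) \<bullet> W = t \<bullet> W"
  unfolding inner_sum by (rule sum.cong) (use assms in \<open>auto simp: min_def\<close>)

locale npp =
  fixes tl_of hd_of :: "'e::finite \<Rightarrow> 'v::finite"
    and c :: "'e \<Rightarrow> real"
    and tol :: "'k::finite \<Rightarrow> 'e"
    and o' d :: 'v
  assumes c_nonneg: "\<forall>a. c a \<ge> 0"
    and inj_tol: "inj tol"
    and od: "o' \<noteq> d"
    and tf: "tollfree_path tl_of hd_of tol o' d"
begin

sublocale G: fin_digraph "gr tl_of hd_of" by (rule fin_gr)

definition cnt :: "'e list \<Rightarrow> 'e \<Rightarrow> real" where
  "cnt p a = real (count_list p a)"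

definition kap :: "real^'k \<Rightarrow> 'e \<Rightarrow> real" where
  "kap t a = c a + ext_toll tol t a"

lemma cnt_Cons: "cnt (e # p) a = cnt p a + (if e = a then 1 else 0)"
  by (simp add: cnt_def)

lemma cnt_nonneg: "cnt p a \<ge> 0" by (simp add: cnt_def)

lemma walk_flow:
  "G.awalk u p v \<Longrightarrow>
   (\<Sum>a\<in>UNIV. incidence tl_of hd_of i a * cnt p a) = (if i = u then 1 else 0) - (if i = v then 1 else 0)"
proof (induction p arbitrary: u)
  case Nil
  then show ?case by (simp add: cnt_def G.awalk_Nil_iff)
next
  case (Cons e p)
  then have e: "tl_of e = u" and w: "G.awalk (hd_of e) p v" by (auto simp: G.awalk_Cons_iff)
  have "(\<Sum>a\<in>UNIV. incidence tl_of hd_of i a * cnt (e # p) a)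
      = (\<Sum>a\<in>UNIV. incidence tl_of hd_of i a * cnt p a) + incidence tl_of hd_of i e"
    by (simp only: cnt_Cons sum_delta_add)
  also have "\<dots> = (if i = u then 1 else 0) - (if i = v then 1 else 0)"
    using Cons.IH[OF w] e by (auto simp: incidence_def)
  finally show ?case .
qed

lemma walk_in_flows: "G.awalk o' p d \<Longrightarrow> cnt p \<in> flows tl_of hd_of o' d"
  using walk_flow[of o' p d] od by (auto simp: flows_def bvec_def cnt_nonneg)

lemma sum_cnt: "(\<Sum>a\<in>UNIV. f a * cnt p a) = sum_list (map f p)"
proof (induction p)
  case Nil then show ?case by (simp add: cnt_def)
next
  case (Cons e p) then show ?case by (simp only: cnt_Cons sum_delta_add) simp
qed

lemma cost_split:
  "(\<Sum>a\<in>UNIV. c a * x a) + t \<bullet> restr tol x = (\<Sum>a\<in>UNIV. kap t a * x a)"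
  using sum_ext_toll[OF inj_tol, of t x]
  by (simp add: kap_def distrib_right sum.distrib)

lemma weak_duality:
  assumes "dual_feasible tl_of hd_of c tol t y" "x \<in> flows tl_of hd_of o' d"
  shows "(\<Sum>i\<in>UNIV. bvec o' d i * y i) \<le> (\<Sum>a\<in>UNIV. c a * x a) + t \<bullet> restr tol x"
proof -
  have fl: "\<And>i. (\<Sum>a\<in>UNIV. incidence tl_of hd_of i a * x a) = bvec o' d i" and xn: "\<And>a. x a \<ge> 0"
    using assms(2) by (auto simp: flows_def)
  have df: "y (tl_of a) - y (hd_of a) \<le> kap t a" for a
  proof -
    have "(\<Sum>i\<in>UNIV. incidence tl_of hd_of i a * y i) - ext_toll tol t a \<le> c a"
      using assms(1) unfolding dual_feasible_def by blast
    then show ?thesis unfolding sum_incidence kap_def by simp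
  qed
  have "(\<Sum>i\<in>UNIV. bvec o' d i * y i) = (\<Sum>i\<in>UNIV. \<Sum>a\<in>UNIV. incidence tl_of hd_of i a * x a * y i)"
    by (simp add: fl[symmetric] sum_distrib_right)
  also have "\<dots> = (\<Sum>a\<in>UNIV. \<Sum>i\<in>UNIV. incidence tl_of hd_of i a * x a * y i)"
    by (rule sum.swap)
  also have "\<dots> = (\<Sum>a\<in>UNIV. x a * (y (tl_of a) - y (hd_of a)))"
    by (simp add: sum_incidence[symmetric] sum_distrib_left mult_ac)
  also have "\<dots> \<le> (\<Sum>a\<in>UNIV. kap t a * x a)"
    by (rule sum_mono) (use df xn in \<open>simp add: mult.commute mult_left_mono\<close>)
  finally show ?thesis by (simp add: cost_split)
qed

lemma tollfree_walk_aux: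
  "(u, v) \<in> {(tl_of a, hd_of a) | a. a \<notin> range tol}\<^sup>* \<Longrightarrow>
   \<exists>p. G.awalk u p v \<and> (\<forall>a\<in>set p. a \<notin> range tol)"
proof (induction rule: converse_rtrancl_induct)
  case base
  then show ?case by (auto simp: G.awalk_Nil_iff intro: exI[of _ "[]"])
next
  case (step u u')
  then obtain a p where "tl_of a = u" "hd_of a = u'" "a \<notin> range tol" "G.awalk u' p v" "\<forall>a\<in>set p. a \<notin> range tol"
    by blast
  then show ?case by (intro exI[of _ "a # p"]) (auto simp: G.awalk_Cons_iff)
qed

lemma tollfree_walk: "\<exists>p. G.awalk o' p d \<and> (\<forall>a\<in>set p. a \<notin> range tol)"
  using tf tollfree_walk_aux by (simp add: tollfree_path_def)

lemma kap_nonneg: "nonneg t \<Longrightarrow> kap t a \<ge> 0"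
  using c_nonneg ext_toll_nonneg[of t tol a] by (simp add: kap_def)

lemma dual_attain:
  assumes t: "nonneg t"
  shows "\<exists>y p. dual_feasible tl_of hd_of c tol t y \<and> G.apath o' p d \<and>
     (\<Sum>i\<in>UNIV. bvec o' d i * y i) = G.awalk_cost (kap t) p \<and>
     (\<forall>q. G.awalk o' q d \<longrightarrow> G.awalk_cost (kap t) p \<le> G.awalk_cost (kap t) q)"
proof -
  define \<kappa> where "\<kappa> = kap t"
  have kn: "\<And>a. \<kappa> a \<ge> 0" using kap_nonneg t by (simp add: \<kappa>_def)
  have cn: "G.awalk_cost \<kappa> q \<ge> 0" for q using kn unfolding G.awalk_cost_def by (intro sum_list_nonneg) auto
  define reach where "reach i \<longleftrightarrow> (\<exists>p. G.awalk i p d)" for i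
  define m where "m i = real_of_ereal (G.\<mu> \<kappa> i d)" for i
  have mp: "\<exists>p. G.apath i p d \<and> G.\<mu> \<kappa> i d = ereal (m i) \<and> m i = G.awalk_cost \<kappa> p" if r: "reach i" for i
  proof -
    obtain p where "G.apath i p d" "G.\<mu> \<kappa> i d = ereal (G.awalk_cost \<kappa> p)"
      using G.min_cost_awalk[OF G.reachable_awalk[THEN iffD2], of i d \<kappa>] kn r reach_def by auto
    then show ?thesis by (auto simp: m_def)
  qed
  have ml: "m i \<le> G.awalk_cost \<kappa> q" if "G.awalk i q d" for i q
  proof -
    have "reach i" using that reach_def by blast
    then obtain p where "G.\<mu> \<kappa> i d = ereal (m i)" using mp by blast
    moreover have "G.\<mu> \<kappa> i d \<le> ereal (G.awalk_cost \<kappa> q)"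
      using G.min_cost_le_walk_cost[OF that] .
    ultimately show ?thesis by simp
  qed
  define M where "M = (\<Sum>i\<in>UNIV. \<bar>m i\<bar>)"
  have mM: "m i \<le> M" for i
  proof -
    have "\<bar>m i\<bar> \<le> M" unfolding M_def by (rule member_le_sum) auto
    then show ?thesis by simp
  qed
  define y where "y i = (if reach i then m i else M)" for i
  have feas: "y (tl_of a) - y (hd_of a) \<le> \<kappa> a" for a
  proof (cases "reach (hd_of a)")
    case True
    then obtain q where q: "G.apath (hd_of a) q d" "m (hd_of a) = G.awalk_cost \<kappa> q" using mp by blast
    then have w: "G.awalk (tl_of a) (a # q) d" by (auto simp: G.awalk_Cons_iff G.apath_def)
    then have "reach (tl_of a)" using reach_def by blast
    moreover have "m (tl_of a) \<le> \<kappa> a + m (hd_of a)" using ml[OF w] q by simp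
    ultimately show ?thesis using True by (simp add: y_def)
  next
    case False
    then show ?thesis using mM[of "tl_of a"] kn[of a] by (auto simp: y_def)
  qed
  have df: "dual_feasible tl_of hd_of c tol t y"
    unfolding dual_feasible_def sum_incidence using t feas by (simp add: \<kappa>_def kap_def) (smt (verit))
  obtain p0 where "G.awalk o' p0 d" using tollfree_walk by blast
  then have ro: "reach o'" using reach_def by blast
  have rd: "reach d" unfolding reach_def by (rule exI[of _ "[]"]) (simp add: G.awalk_Nil_iff)
  have md: "m d = 0"
  proof -
    have "m d \<le> 0" using ml[of d "[]"] by (simp add: G.awalk_Nil_iff)
    moreover obtain p where "m d = G.awalk_cost \<kappa> p" using mp rd by blast
    ultimately show ?thesis using cn[of p] by simp
  qed
  obtain po where po: "G.apath o' po d" "m o' = G.awalk_cost \<kappa> po" using mp ro by blast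
  have "(\<Sum>i\<in>UNIV. bvec o' d i * y i) = G.awalk_cost \<kappa> po"
    using sum_bvec[OF od, of y] ro rd md po by (simp add: y_def)
  moreover have "\<forall>q. G.awalk o' q d \<longrightarrow> G.awalk_cost \<kappa> po \<le> G.awalk_cost \<kappa> q"
    using ml po by metis
  ultimately show ?thesis using df po unfolding \<kappa>_def by blast
qed

definition P :: "'e list set" where "P = {p. G.apath o' p d}"
definition Cp :: "'e list \<Rightarrow> real" where "Cp p = (\<Sum>a\<in>UNIV. c a * cnt p a)"
definition Wp :: "'e list \<Rightarrow> real^'k" where "Wp p = restr tol (cnt p)"
definition Fv :: "real^'k \<Rightarrow> 'e list \<Rightarrow> real" where "Fv t p = Cp p + t \<bullet> Wp p"
definition F :: "real^'k \<Rightarrow> real" where "F t = Min ((\<lambda>p. Fv t p) ` P)"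
definition p0 :: "'e list" where "p0 = (SOME p. G.awalk o' p d \<and> (\<forall>a\<in>set p. a \<notin> range tol))"
definition Lc :: real where "Lc = Cp p0"

lemma p0: "G.awalk o' p0 d" "\<forall>a\<in>set p0. a \<notin> range tol"
  using someI_ex[OF tollfree_walk] unfolding p0_def by blast+

lemma Fv_cost: "Fv t p = G.awalk_cost (kap t) p"
  by (simp only: Fv_def Cp_def Wp_def cost_split) (simp add: sum_cnt G.awalk_cost_def)

lemma P_finite: "finite P" unfolding P_def by (rule G.apaths_finite)

lemma P_walk: "p \<in> P \<Longrightarrow> G.awalk o' p d" by (simp add: P_def G.apath_def)

lemma P_flow: "p \<in> P \<Longrightarrow> cnt p \<in> flows tl_of hd_of o' d" by (simp add: P_walk walk_in_flows)

lemma nonneg0: "nonneg 0" by (simp add: nonneg_def)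

lemma P_nonempty: "P \<noteq> {}"
  using dual_attain[OF nonneg0] by (auto simp: P_def)

lemma F_props:
  assumes "nonneg t"
  shows "\<exists>y q. dual_feasible tl_of hd_of c tol t y \<and> q \<in> P \<and> (\<Sum>i\<in>UNIV. bvec o' d i * y i) = F t
     \<and> F t = Fv t q \<and> (\<forall>p\<in>P. F t \<le> Fv t p)"
proof -
  obtain y po where y: "dual_feasible tl_of hd_of c tol t y" "G.apath o' po d"
     "(\<Sum>i\<in>UNIV. bvec o' d i * y i) = G.awalk_cost (kap t) po"
     "\<forall>q. G.awalk o' q d \<longrightarrow> G.awalk_cost (kap t) po \<le> G.awalk_cost (kap t) q"
    using dual_attain[OF assms] by blast
  have po: "po \<in> P" using y(2) by (simp add: P_def)
  have le: "\<forall>p\<in>P. Fv t po \<le> Fv t p" using y(4) P_walk by (simp add: Fv_cost)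
  have "F t = Fv t po" unfolding F_def
    by (rule Min_eqI) (use P_finite le po in auto)
  then show ?thesis using y(1,3) po le by (intro exI[of _ y] exI[of _ po]) (simp add: Fv_cost)
qed

lemma F_le_Fv: "nonneg t \<Longrightarrow> p \<in> P \<Longrightarrow> F t \<le> Fv t p"
  using F_props by blast

lemma dual_le_F:
  assumes "dual_feasible tl_of hd_of c tol t y"
  shows "(\<Sum>i\<in>UNIV. bvec o' d i * y i) \<le> F t"
proof -
  have "nonneg t" using assms by (simp add: dual_feasible_def)
  then obtain q where q: "q \<in> P" "F t = Fv t q" using F_props by blast
  show ?thesis using weak_duality[OF assms P_flow[OF q(1)]] q by (simp add: Fv_def Cp_def Wp_def)
qed

lemma Wp0: "Wp p0 = 0"
proof -
  have "count_list p0 (tol k) = 0" for k using p0(2) by (auto simp add: count_list_0_iff)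
  then show ?thesis by (simp add: Wp_def restr_def cnt_def vec_eq_iff)
qed

lemma F_le_L: "nonneg t \<Longrightarrow> F t \<le> Lc"
proof -
  assume "nonneg t"
  then obtain y where y: "dual_feasible tl_of hd_of c tol t y" "(\<Sum>i\<in>UNIV. bvec o' d i * y i) = F t"
    using F_props by blast
  show ?thesis using weak_duality[OF y(1) walk_in_flows[OF p0(1)]] y(2) Wp0
    by (simp add: Lc_def Cp_def Wp_def)
qed

lemma fval_eq: "nonneg t \<Longrightarrow> fval tl_of hd_of o' d c tol t = ereal (F t)"
proof -
  assume t: "nonneg t"
  then obtain y q where y: "dual_feasible tl_of hd_of c tol t y" "q \<in> P" "(\<Sum>i\<in>UNIV. bvec o' d i * y i) = F t"
     "F t = Fv t q"
    using F_props by blast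
  have "(INF x\<in>flows tl_of hd_of o' d. ereal ((\<Sum>a\<in>UNIV. c a * x a) + t \<bullet> restr tol x)) = ereal (F t)"
  proof (rule antisym)
    show "(INF x\<in>flows tl_of hd_of o' d. ereal ((\<Sum>a\<in>UNIV. c a * x a) + t \<bullet> restr tol x)) \<le> ereal (F t)"
      by (rule INF_lower2[OF P_flow[OF y(2)]]) (simp add: y(4) Fv_def Cp_def Wp_def)
    show "ereal (F t) \<le> (INF x\<in>flows tl_of hd_of o' d. ereal ((\<Sum>a\<in>UNIV. c a * x a) + t \<bullet> restr tol x))"
      by (rule INF_greatest) (use weak_duality[OF y(1)] y(3) in auto)
  qed
  then show ?thesis using t by (simp add: fval_def)
qed

lemma Tset_char:
  "Tset tl_of hd_of o' d c tol w = {t. nonneg t \<and> (\<forall>t'. nonneg t' \<longrightarrow> F t' - w \<bullet> t' \<le> F t - w \<bullet> t)}"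
proof (intro set_eqI iffI)
  fix t assume "t \<in> Tset tl_of hd_of o' d c tol w"
  then obtain y where y: "dual_feasible tl_of hd_of c tol t y"
     "\<forall>t' y'. dual_feasible tl_of hd_of c tol t' y' \<longrightarrow> dual_obj o' d w t' y' \<le> dual_obj o' d w t y"
    by (auto simp: Tset_def)
  have "nonneg t" using y(1) by (simp add: dual_feasible_def)
  moreover have "F t' - w \<bullet> t' \<le> F t - w \<bullet> t" if t': "nonneg t'" for t'
  proof -
  obtain y' where y': "dual_feasible tl_of hd_of c tol t' y'" "(\<Sum>i\<in>UNIV. bvec o' d i * y' i) = F t'"
    using F_props[OF t'] by blast
  have "F t' - w \<bullet> t' \<le> (\<Sum>i\<in>UNIV. bvec o' d i * y i) - w \<bullet> t"
    using y(2) y' unfolding dual_obj_def by metis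
  also have "\<dots> \<le> F t - w \<bullet> t" using dual_le_F[OF y(1)] by simp
  finally show "F t' - w \<bullet> t' \<le> F t - w \<bullet> t" .
  qed
  ultimately show "t \<in> {t. nonneg t \<and> (\<forall>t'. nonneg t' \<longrightarrow> F t' - w \<bullet> t' \<le> F t - w \<bullet> t)}" by blast
next
  fix t assume "t \<in> {t. nonneg t \<and> (\<forall>t'. nonneg t' \<longrightarrow> F t' - w \<bullet> t' \<le> F t - w \<bullet> t)}"
  then have t: "nonneg t" and opt: "\<forall>t'. nonneg t' \<longrightarrow> F t' - w \<bullet> t' \<le> F t - w \<bullet> t" by auto
  obtain y where y: "dual_feasible tl_of hd_of c tol t y" "(\<Sum>i\<in>UNIV. bvec o' d i * y i) = F t"
    using F_props[OF t] by blast
  have "dual_obj o' d w t' y' \<le> dual_obj o' d w t y" if "dual_feasible tl_of hd_of c tol t' y'" for t' y'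
  proof -
    have "nonneg t'" using that by (simp add: dual_feasible_def)
    then show ?thesis using dual_le_F[OF that] opt y(2) by (force simp: dual_obj_def)
  qed
  then show "t \<in> Tset tl_of hd_of o' d c tol w" using y(1) by (auto simp: Tset_def)
qed

lemma epi_char:
  "gval tl_of hd_of o' d c tol w \<le> ereal m \<longleftrightarrow> (\<forall>t. nonneg t \<longrightarrow> F t - t \<bullet> w \<le> m)"
proof -
  have "fval tl_of hd_of o' d c tol t - ereal (t \<bullet> w) \<le> ereal m \<longleftrightarrow> (nonneg t \<longrightarrow> F t - t \<bullet> w \<le> m)" for t
    by (cases "nonneg t") (simp_all add: fval_eq, simp add: fval_def)
  then show ?thesis unfolding gval_def by (simp add: SUP_le_iff)
qed

lemma distinct_count_le1: "distinct xs \<Longrightarrow> count_list xs a \<le> 1"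
  by (induction xs) auto

lemma Wp_01: "q \<in> P \<Longrightarrow> Wp q $ k = 0 \<or> Wp q $ k = 1"
proof -
  assume "q \<in> P"
  then have "distinct q" using G.distinct_verts_imp_distinct by (auto simp: P_def G.apath_def)
  then have "count_list q (tol k) \<le> 1" by (rule distinct_count_le1)
  then show ?thesis by (auto simp: Wp_def restr_def cnt_def)
qed

lemma Wp_nonneg: "Wp q $ k \<ge> 0" by (simp add: Wp_def restr_def cnt_def)

lemma Cp_nonneg: "Cp q \<ge> 0"
  unfolding Cp_def using c_nonneg cnt_nonneg by (intro sum_nonneg) auto

definition K :: "'e list \<Rightarrow> (real^'k) set" where
  "K q = {t. nonneg t \<and> (\<forall>p\<in>P. Fv t q \<le> Fv t p)}"

definition Mb :: real where "Mb = Lc + 1"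

definition Bx :: "(real^'k) set" where "Bx = cbox 0 (\<chi> k. Mb)"

lemma Lc_nonneg: "Lc \<ge> 0" by (simp add: Lc_def Cp_nonneg)

lemma K_F: "t \<in> K q \<Longrightarrow> q \<in> P \<Longrightarrow> F t = Fv t q"
proof -
  assume t: "t \<in> K q" and q: "q \<in> P"
  then have "nonneg t" by (simp add: K_def)
  then obtain p where "p \<in> P" "F t = Fv t p" "\<forall>p\<in>P. F t \<le> Fv t p" using F_props by blast
  then show ?thesis using t q by (force simp: K_def)
qed

lemma K_rev_le: "t \<in> K q \<Longrightarrow> q \<in> P \<Longrightarrow> t \<bullet> Wp q \<le> Lc"
  using K_F F_le_L Cp_nonneg[of q] by (fastforce simp: K_def Fv_def)

lemma capping:
  assumes q: "q \<in> P" and t: "t \<in> K q"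
  shows "\<exists>t'\<in>K q \<inter> Bx. t' \<bullet> Wp q = t \<bullet> Wp q"
proof -
  define t' where "t' = (\<chi> k. min (t $ k) Mb)"
  have tn: "nonneg t" using t by (simp add: K_def)
  have small: "t $ k \<le> Mb" if "Wp q $ k \<noteq> 0" for k
  proof -
    have "Wp q $ k = 1" using Wp_01[OF q, of k] that by auto
    moreover have "t $ k * Wp q $ k \<le> t \<bullet> Wp q" by (rule term_le_inner[OF tn]) (rule Wp_nonneg)
    ultimately have "t $ k \<le> t \<bullet> Wp q" by simp
    then show ?thesis using K_rev_le[OF t q] by (simp add: Mb_def)
  qed
  have eq: "t' \<bullet> Wp q = t \<bullet> Wp q" unfolding t'_def by (rule cap_inner) (use small in auto)
  have t'n: "nonneg t'" using tn Lc_nonneg by (simp add: t'_def nonneg_def Mb_def)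
  have "Fv t' q \<le> Fv t' p" if p: "p \<in> P" for p
  proof (cases "\<exists>k. Wp p $ k \<noteq> 0 \<and> Mb < t $ k")
    case True
    then obtain k where k: "Wp p $ k \<noteq> 0" "Mb < t $ k" by blast
    have "Wp p $ k = 1" using Wp_01[OF p, of k] k by auto
    moreover have "t' $ k * Wp p $ k \<le> t' \<bullet> Wp p" by (rule term_le_inner[OF t'n]) (rule Wp_nonneg)
    ultimately have "Mb \<le> t' \<bullet> Wp p" using k by (simp add: t'_def)
    then have "Mb \<le> Fv t' p" using Cp_nonneg[of p] by (simp add: Fv_def)
    moreover have "Fv t' q = F t" using eq K_F[OF t q] by (simp add: Fv_def)
    moreover have "F t \<le> Lc" using F_le_L[OF tn] .
    ultimately show ?thesis by (simp add: Mb_def)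
  next
    case False
    then have "t' \<bullet> Wp p = t \<bullet> Wp p" unfolding t'_def by (intro cap_inner) force
    then show ?thesis using eq t p by (simp add: Fv_def K_def)
  qed
  then have "t' \<in> K q" using t'n by (simp add: K_def)
  moreover have "t' \<in> Bx" using tn Lc_nonneg by (simp add: Bx_def mem_box_cart t'_def nonneg_def Mb_def)
  ultimately show ?thesis using eq by blast
qed

lemma closed_K: "closed (K q)"
proof -
  have "K q = (\<Inter>k\<in>UNIV. {t. 0 \<le> t $ k}) \<inter> (\<Inter>p\<in>P. {t. Cp q + t \<bullet> Wp q \<le> Cp p + t \<bullet> Wp p})"
    by (auto simp: K_def nonneg_def Fv_def)
  moreover have "closed (\<Inter>k\<in>UNIV. {t::real^'k. 0 \<le> t $ k})"
    by (intro closed_INT ballI closed_Collect_le continuous_intros)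
  moreover have "closed (\<Inter>p\<in>P. {t. Cp q + t \<bullet> Wp q \<le> Cp p + t \<bullet> Wp p})"
    by (intro closed_INT ballI closed_Collect_le continuous_intros)
  ultimately show ?thesis by (simp add: closed_Int)
qed

definition U :: "real set" where "U = (\<Union>q\<in>P. (\<lambda>t. t \<bullet> Wp q) ` (K q \<inter> Bx))"

lemma U_compact: "compact U"
  unfolding U_def
  by (intro compact_UN P_finite compact_continuous_image continuous_intros closed_Int_compact closed_K)
     (simp add: Bx_def)

lemma zero_in_U: "0 \<in> U"
proof -
  obtain q where q: "q \<in> P" "F 0 = Fv 0 q" "\<forall>p\<in>P. F 0 \<le> Fv 0 p" using F_props[OF nonneg0] by blast
  then have "0 \<in> K q" using nonneg0 by (simp add: K_def)
  moreover have "(0::real^'k) \<in> Bx" using Lc_nonneg by (simp add: Bx_def mem_box_cart Mb_def)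
  ultimately show ?thesis using q unfolding U_def by force
qed

definition R :: real where "R = (SOME r. r \<in> U \<and> (\<forall>x\<in>U. x \<le> r))"

lemma R_props: "R \<in> U" "\<forall>x\<in>U. x \<le> R"
proof -
  have "\<exists>r. r \<in> U \<and> (\<forall>x\<in>U. x \<le> r)" using compact_attains_sup[OF U_compact] zero_in_U by blast
  from someI_ex[OF this] show "R \<in> U" "\<forall>x\<in>U. x \<le> R" unfolding R_def by blast+
qed

lemma R_nonneg: "R \<ge> 0" using R_props zero_in_U by blast

lemma Rmax: "q \<in> P \<Longrightarrow> t \<in> K q \<Longrightarrow> t \<bullet> Wp q \<le> R"
proof -
  assume q: "q \<in> P" and t: "t \<in> K q"
  obtain t' where "t' \<in> K q \<inter> Bx" "t' \<bullet> Wp q = t \<bullet> Wp q" using capping[OF q t] by blast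
  then have "t \<bullet> Wp q \<in> (\<lambda>t. t \<bullet> Wp q) ` (K q \<inter> Bx)" by (metis image_eqI)
  then have "t \<bullet> Wp q \<in> U" using q unfolding U_def by (rule UN_I[rotated])
  then show ?thesis using R_props by blast
qed

lemma upper:
  assumes "t \<in> Tset tl_of hd_of o' d c tol w"
  shows "w \<bullet> t \<le> R"
proof (rule ccontr)
  assume "\<not> w \<bullet> t \<le> R"
  define x where "x = w \<bullet> t"
  have xR: "x > R" using \<open>\<not> w \<bullet> t \<le> R\<close> by (simp add: x_def)
  then have x0: "x > 0" using R_nonneg by simp
  have tn: "nonneg t" and opt: "\<And>t'. nonneg t' \<Longrightarrow> F t' - w \<bullet> t' \<le> F t - w \<bullet> t"
    using assms by (auto simp: Tset_char)
  define s where "s = (x - R) / (2 * x)"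
  have s0: "0 < s" using xR x0 by (simp add: s_def)
  have s1: "s < 1" using xR x0 R_nonneg by (simp add: s_def field_simps)
  define ts where "ts = (1 - s) *\<^sub>R t"
  have tsn: "nonneg ts" using tn s1 by (simp add: ts_def nonneg_def)
  obtain q where q: "q \<in> P" "F ts = Fv ts q" "\<forall>p\<in>P. F ts \<le> Fv ts p" using F_props[OF tsn] by blast
  have tsK: "ts \<in> K q" using q tsn by (simp add: K_def)
  define r where "r = t \<bullet> Wp q"
  have "F ts - w \<bullet> ts \<le> F t - w \<bullet> t" using opt[OF tsn] .
  moreover have "F ts = Cp q + (1 - s) * r" using q(2) by (simp add: Fv_def ts_def r_def)
  moreover have "F t \<le> Cp q + r" using F_le_Fv[OF tn q(1)] by (simp add: Fv_def r_def)
  moreover have "w \<bullet> ts = (1 - s) * x" by (simp add: ts_def x_def)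
  ultimately have "s * x \<le> s * r" by (simp add: x_def algebra_simps)
  then have xr: "x \<le> r" using s0 by simp
  have "ts \<bullet> Wp q \<le> R" using Rmax[OF q(1) tsK] .
  then have "(1 - s) * r \<le> R" by (simp add: ts_def r_def)
  moreover have "(1 - s) * x \<le> (1 - s) * r" using xr s1 by (simp add: mult_left_mono)
  moreover have "(1 - s) * x = (x + R) / 2" using x0 by (simp add: s_def field_simps)
  ultimately show False using xR by simp
qed

definition Opt :: "'e list \<Rightarrow> bool" where "Opt q \<longleftrightarrow> q \<in> P \<and> (\<exists>t\<in>K q. t \<bullet> Wp q = R)"
definition supp :: "'e list \<Rightarrow> nat" where "supp q = card {k. Wp q $ k \<noteq> 0}"

lemma Opt_ex: "\<exists>q. Opt q"
proof -
  obtain q t where "q \<in> P" "t \<in> K q \<inter> Bx" "R = t \<bullet> Wp q" using R_props(1) unfolding U_def by blast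
  then show ?thesis unfolding Opt_def by (intro exI[of _ q] conjI bexI[of _ t]) auto
qed

definition qs :: "'e list" where "qs = (SOME q. Opt q \<and> (\<forall>q'. Opt q' \<longrightarrow> supp q \<le> supp q'))"

lemma qs: "Opt qs" "Opt q' \<Longrightarrow> supp qs \<le> supp q'"
proof -
  obtain q0 where "Opt q0" using Opt_ex by blast
  from someI_ex[OF ex_has_least_nat[of Opt q0 supp, OF this]]
  show "Opt qs" "Opt q' \<Longrightarrow> supp qs \<le> supp q'" unfolding qs_def by blast+
qed

definition ts :: "real^'k" where "ts = (SOME t. t \<in> K qs \<and> t \<bullet> Wp qs = R)"

lemma ts: "ts \<in> K qs" "ts \<bullet> Wp qs = R" "qs \<in> P"
proof -
  have "\<exists>t. t \<in> K qs \<and> t \<bullet> Wp qs = R" using qs(1) by (auto simp: Opt_def)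
  from someI_ex[OF this] show "ts \<in> K qs" "ts \<bullet> Wp qs = R" unfolding ts_def by blast+
  show "qs \<in> P" using qs(1) by (simp add: Opt_def)
qed

lemma tsn: "nonneg ts" using ts(1) by (simp add: K_def)

lemma cbp: "cbp_optimal tl_of hd_of o' d c tol (Wp qs) ts"
proof -
  have "nonneg (Wp qs)" by (simp add: nonneg_def Wp_nonneg)
  moreover have "ts \<in> Tset tl_of hd_of o' d c tol (Wp qs)"
  proof -
    have "F t' - Wp qs \<bullet> t' \<le> F ts - Wp qs \<bullet> ts" if "nonneg t'" for t'
      using F_le_Fv[OF that ts(3)] K_F[OF ts(1) ts(3)] by (simp add: Fv_def inner_commute)
    then show ?thesis using tsn by (simp add: Tset_char)
  qed
  moreover have "w' \<bullet> t' \<le> Wp qs \<bullet> ts" if "t' \<in> Tset tl_of hd_of o' d c tol w'" for w' t'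
    using upper[OF that] ts(2) by (simp add: inner_commute)
  ultimately show ?thesis unfolding cbp_optimal_def by blast
qed

lemma same_W_cost: "p \<in> P \<Longrightarrow> Wp p = Wp qs \<Longrightarrow> Cp qs \<le> Cp p"
  using ts(1) by (auto simp: K_def Fv_def)

lemma strict_point: "\<exists>th. (\<forall>k. 0 < th $ k) \<and> (\<forall>p\<in>P. Wp p \<noteq> Wp qs \<longrightarrow> Fv th qs < Fv th p)"
proof -
  define Wq where "Wq = Wp qs"
  define Cq where "Cq = Cp qs"
  define D where "D = {p\<in>P. Cp p > Cq}"
  have Dfin: "finite D" using P_finite by (simp add: D_def)
  define \<Delta> where "\<Delta> = (if D = {} then 1 else Min ((\<lambda>p. Cp p - Cq) ` D))"
  have \<Delta>0: "\<Delta> > 0"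
  proof (cases "D = {}")
    case False
    then show ?thesis using Dfin by (simp add: \<Delta>_def Min_gr_iff D_def)
  qed (simp add: \<Delta>_def)
  have \<Delta>D: "\<Delta> \<le> Cp p - Cq" if "p \<in> D" for p
    using that Dfin by (auto simp: \<Delta>_def intro!: Min_le)
  define SW where "SW = (\<Sum>k\<in>UNIV. Wq $ k)"
  have SW0: "SW \<ge> 0" unfolding SW_def Wq_def using Wp_nonneg by (intro sum_nonneg) auto
  define \<eta> where "\<eta> = \<Delta> / (2 * (1 + SW))"
  have \<eta>0: "\<eta> > 0" using \<Delta>0 SW0 by (simp add: \<eta>_def)
  have \<eta>SW: "\<eta> * SW < \<Delta> / 2" using \<Delta>0 SW0 by (simp add: \<eta>_def field_simps)
  define a where "a k = ts $ k / 2 + \<eta>" for k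
  have apos: "a k > 0" for k using tsn \<eta>0 by (simp add: a_def nonneg_def add_nonneg_pos)
  have asum: "(\<Sum>k\<in>UNIV. a k * W $ k) = ts \<bullet> W / 2 + \<eta> * (\<Sum>k\<in>UNIV. W $ k)" for W :: "real^'k"
    by (simp add: a_def inner_sum distrib_right sum.distrib sum_distrib_left sum_divide_distrib)
  define Mp where "Mp = Cq + (\<Sum>k\<in>UNIV. a k * Wq $ k) + 1"
  have Mp1: "Mp \<ge> 1"
  proof -
    have "(\<Sum>k\<in>UNIV. a k * Wq $ k) \<ge> 0"
      using apos Wp_nonneg unfolding Wq_def by (intro sum_nonneg) (simp add: less_imp_le)
    then show ?thesis using Cp_nonneg[of qs] by (simp add: Mp_def Cq_def)
  qed
  define th where "th = (\<chi> k. if Wq $ k \<noteq> 0 then a k else Mp)"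
  have thpos: "\<forall>k. 0 < th $ k" using apos Mp1 by (simp add: th_def)
  then have thn: "nonneg th" by (simp add: nonneg_def less_imp_le)
  have thW: "th \<bullet> W = (\<Sum>k\<in>UNIV. a k * W $ k)" if "\<forall>k. W $ k \<noteq> 0 \<longrightarrow> Wq $ k \<noteq> 0" for W
    unfolding inner_sum by (rule sum.cong) (use that in \<open>auto simp: th_def\<close>)
  have Fq: "Fv th qs = Mp - 1" using thW[of Wq] by (simp add: Fv_def Mp_def Wq_def Cq_def)
  have tsK: "Fv ts qs \<le> Fv ts r" if "r \<in> P" for r using ts(1) that by (simp add: K_def)
  have strict: "Fv th qs < Fv th p" if p: "p \<in> P" "Wp p \<noteq> Wq" for p
  proof (cases "\<exists>k. Wp p $ k \<noteq> 0 \<and> Wq $ k = 0")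
    case True
    then obtain k where k: "Wp p $ k \<noteq> 0" "Wq $ k = 0" by blast
    have "Wp p $ k = 1" using Wp_01[OF p(1), of k] k by auto
    moreover have "th $ k * Wp p $ k \<le> th \<bullet> Wp p" by (rule term_le_inner[OF thn]) (rule Wp_nonneg)
    ultimately have "Mp \<le> th \<bullet> Wp p" using k by (simp add: th_def)
    then show ?thesis using Fq Cp_nonneg[of p] by (simp add: Fv_def)
  next
    case False
    then have sub: "\<forall>k. Wp p $ k \<noteq> 0 \<longrightarrow> Wq $ k \<noteq> 0" by auto
    have le: "Wp p $ k \<le> Wq $ k" for k
      using Wp_01[OF p(1), of k] Wp_01[OF ts(3), of k] sub unfolding Wq_def by force
    have thp: "th \<bullet> Wp p = (\<Sum>k\<in>UNIV. a k * Wp p $ k)" using thW sub by blast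
    show ?thesis
    proof (cases "Cp p \<le> Cq")
      case True
      have tle: "ts \<bullet> Wp p \<le> ts \<bullet> Wq" unfolding inner_sum
        by (rule sum_mono) (use le tsn in \<open>auto simp: mult_left_mono nonneg_def\<close>)
      have "ts \<in> K p"
      proof -
        have "Fv ts p \<le> Fv ts r" if "r \<in> P" for r
          using tsK[OF that] tle True by (simp add: Fv_def Wq_def Cq_def)
        then show ?thesis using tsn by (simp add: K_def)
      qed
      moreover have "ts \<bullet> Wp p \<ge> R"
        using tsK[OF p(1)] True ts(2) by (simp add: Fv_def Wq_def Cq_def)
      moreover have "ts \<bullet> Wp p \<le> R" using Rmax[OF p(1) \<open>ts \<in> K p\<close>] .
      ultimately have "Opt p" using p(1) unfolding Opt_def by force
      then have "supp qs \<le> supp p" by (rule qs(2))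
      moreover have "{k. Wp p $ k \<noteq> 0} \<subset> {k. Wq $ k \<noteq> 0}"
      proof
        show "{k. Wp p $ k \<noteq> 0} \<subseteq> {k. Wq $ k \<noteq> 0}" using sub by blast
        obtain k where "Wp p $ k \<noteq> Wq $ k" using p(2) by (auto simp: vec_eq_iff)
        then have "Wp p $ k = 0" "Wq $ k \<noteq> 0"
          using Wp_01[OF p(1), of k] Wp_01[OF ts(3), of k] le[of k] unfolding Wq_def by auto
        then show "{k. Wp p $ k \<noteq> 0} \<noteq> {k. Wq $ k \<noteq> 0}" by blast
      qed
      then have "supp p < supp qs" unfolding supp_def Wq_def by (intro psubset_card_mono) auto
      ultimately show ?thesis by simp
    next
      case False
      then have "p \<in> D" using p by (simp add: D_def)
      then have dd: "\<Delta> \<le> Cp p - Cq" by (rule \<Delta>D)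
      have k1: "ts \<bullet> Wq - ts \<bullet> Wp p \<le> Cp p - Cq"
        using tsK[OF p(1)] by (simp add: Fv_def Wq_def Cq_def)
      have sp: "(\<Sum>k\<in>UNIV. Wp p $ k) \<ge> 0" using Wp_nonneg by (intro sum_nonneg) auto
      have "\<eta> * (SW - (\<Sum>k\<in>UNIV. Wp p $ k)) \<le> \<eta> * SW" using \<eta>0 sp by (simp add: algebra_simps)
      have e1: "th \<bullet> Wq = ts \<bullet> Wq / 2 + \<eta> * SW"
        using thW[of Wq] asum[of Wq] unfolding SW_def by simp
      have e2: "th \<bullet> Wp p = ts \<bullet> Wp p / 2 + \<eta> * (\<Sum>k\<in>UNIV. Wp p $ k)"
        using thp asum[of "Wp p"] by simp
      have "th \<bullet> Wq - th \<bullet> Wp p = (ts \<bullet> Wq - ts \<bullet> Wp p) / 2 + \<eta> * (SW - (\<Sum>k\<in>UNIV. Wp p $ k))"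
        unfolding e1 e2 by (simp add: algebra_simps diff_divide_distrib)
      also have "\<dots> < Cp p - Cq"
      proof -
        have "(ts \<bullet> Wq - ts \<bullet> Wp p) / 2 \<le> (Cp p - Cq) / 2" using k1 by simp
        moreover have "\<eta> * (SW - (\<Sum>k\<in>UNIV. Wp p $ k)) < \<Delta> / 2"
          using \<eta>SW \<open>\<eta> * (SW - (\<Sum>k\<in>UNIV. Wp p $ k)) \<le> \<eta> * SW\<close> by linarith
        moreover have "\<And>X Y Z D::real. X / 2 \<le> Z / 2 \<Longrightarrow> Y < D / 2 \<Longrightarrow> D \<le> Z \<Longrightarrow> X / 2 + Y < Z"
          by linarith
        ultimately show ?thesis using dd by blast
      qed
      finally show ?thesis by (simp add: Fv_def Wq_def Cq_def)
    qed
  qed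
  show ?thesis using thpos strict unfolding Wq_def by blast
qed

lemma ball_in: "\<exists>th e. e > 0 \<and> (\<forall>t\<in>ball th e. nonneg t \<and> F t = Cp qs + t \<bullet> Wp qs)"
proof -
  obtain th where th: "\<forall>k. 0 < th $ k" "\<forall>p\<in>P. Wp p \<noteq> Wp qs \<longrightarrow> Fv th qs < Fv th p"
    using strict_point by blast
  define Oset where "Oset = (\<Inter>k\<in>UNIV. {t::real^'k. 0 < t $ k}) \<inter>
     (\<Inter>p\<in>{p\<in>P. Wp p \<noteq> Wp qs}. {t. Cp qs + t \<bullet> Wp qs < Cp p + t \<bullet> Wp p})"
  have "open Oset" unfolding Oset_def
    by (intro open_Int open_INT ballI open_Collect_less continuous_intros) (use P_finite in auto)
  moreover have "th \<in> Oset" using th by (auto simp: Oset_def Fv_def)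
  ultimately obtain e where e: "e > 0" "ball th e \<subseteq> Oset" by (rule openE)
  have "nonneg t \<and> F t = Cp qs + t \<bullet> Wp qs" if "t \<in> Oset" for t
  proof -
    have tn: "nonneg t" using that by (auto simp: Oset_def nonneg_def less_imp_le)
    have "Fv t qs \<le> Fv t p" if p: "p \<in> P" for p
    proof (cases "Wp p = Wp qs")
      case True then show ?thesis using same_W_cost[OF p True] by (simp add: Fv_def)
    next
      case False then show ?thesis using \<open>t \<in> Oset\<close> p by (auto simp: Oset_def Fv_def)
    qed
    moreover obtain p where "p \<in> P" "F t = Fv t p" using F_props[OF tn] by blast
    ultimately have "F t = Fv t qs" using F_le_Fv[OF tn ts(3)] by force
    then show ?thesis using tn by (simp add: Fv_def)
  qed
  then show ?thesis using e by blast
qed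

lemma extreme: "(Wp qs, Cp qs) extreme_point_of epigraph (gval tl_of hd_of o' d c tol)"
proof -
  define Wq where "Wq = Wp qs"
  define Cq where "Cq = Cp qs"
  have epi: "(w, m) \<in> epigraph (gval tl_of hd_of o' d c tol) \<longleftrightarrow> (\<forall>t. nonneg t \<longrightarrow> F t - t \<bullet> w \<le> m)" for w m
    by (simp add: epigraph_def epi_char)
  have zin: "(Wq, Cq) \<in> epigraph (gval tl_of hd_of o' d c tol)"
    unfolding epi using F_le_Fv ts(3) by (fastforce simp: Fv_def Wq_def Cq_def)
  obtain th e where e: "e > 0" "\<forall>t\<in>ball th e. nonneg t \<and> F t = Cq + t \<bullet> Wq"
    using ball_in unfolding Wq_def Cq_def by blast
  have "(Wq, Cq) \<notin> open_segment z1 z2"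
    if z1: "z1 \<in> epigraph (gval tl_of hd_of o' d c tol)" and z2: "z2 \<in> epigraph (gval tl_of hd_of o' d c tol)" for z1 z2
  proof
    assume seg: "(Wq, Cq) \<in> open_segment z1 z2"
    obtain w1 m1 where z1e: "z1 = (w1, m1)" by fastforce
    obtain w2 m2 where z2e: "z2 = (w2, m2)" by fastforce
    obtain u where u: "z1 \<noteq> z2" "0 < u" "u < 1" "(Wq, Cq) = (1 - u) *\<^sub>R z1 + u *\<^sub>R z2"
      using seg by (auto simp: in_segment)
    have zW: "Wq = (1 - u) *\<^sub>R w1 + u *\<^sub>R w2" and zC: "Cq = (1 - u) * m1 + u * m2"
      using u(4) by (simp_all add: z1e z2e)
    have h1: "Cq + t \<bullet> Wq - t \<bullet> w1 \<le> m1" if "t \<in> ball th e" for t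
      using z1 e(2) that unfolding z1e epi by fastforce
    have h2: "Cq + t \<bullet> Wq - t \<bullet> w2 \<le> m2" if "t \<in> ball th e" for t
      using z2 e(2) that unfolding z2e epi by fastforce
    have thb: "th \<in> ball th e" using e(1) by simp
    show False
    proof (cases "w1 = w2")
      case True
      then have "Wq = w1" using zW by (simp add: scaleR_left_distrib[symmetric])
      then have a1: "Cq \<le> m1" and a2: "Cq \<le> m2" using h1[OF thb] h2[OF thb] True by auto
      have "m1 = Cq"
      proof (rule ccontr)
        assume "m1 \<noteq> Cq"
        then have "(1 - u) * (m1 - Cq) > 0" using a1 u by simp
        moreover have "u * (m2 - Cq) \<ge> 0" using a2 u by simp
        ultimately show False using zC by (simp add: algebra_simps)
      qed
      moreover have "m2 = Cq"
      proof (rule ccontr)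
        assume "m2 \<noteq> Cq"
        then have "u * (m2 - Cq) > 0" using a2 u by simp
        moreover have "(1 - u) * (m1 - Cq) \<ge> 0" using a1 u by simp
        ultimately show False using zC by (simp add: algebra_simps)
      qed
      ultimately show False using u(1) True by (simp add: z1e z2e)
    next
      case False
      define \<delta> where "\<delta> = w2 - w1"
      have nd: "norm \<delta> > 0" using False by (simp add: \<delta>_def)
      define v where "v = (e / (2 * norm \<delta>)) *\<^sub>R \<delta>"
      have nv: "norm v = e / 2" using nd e(1) by (simp add: v_def)
      have t1: "th + v \<in> ball th e" using nv e(1) by (simp add: dist_norm)
      have t2: "th - v \<in> ball th e" using nv e(1) by (simp add: dist_norm)
      define A where "A = (th + v) \<bullet> \<delta>"
      define B where "B = (th - v) \<bullet> \<delta>"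
      have AB: "A - B = e * norm \<delta>"
      proof -
        have "A - B = 2 * (v \<bullet> \<delta>)" by (simp add: A_def B_def inner_add_left inner_diff_left)
        also have "\<dots> = 2 * (e / (2 * norm \<delta>)) * (norm \<delta>)^2" by (simp add: v_def power2_norm_eq_inner)
        also have "\<dots> = e * norm \<delta>" using nd by (simp add: power2_eq_square field_simps)
        finally show ?thesis .
      qed
      have d1: "Wq - w1 = u *\<^sub>R \<delta>" by (simp add: zW \<delta>_def algebra_simps)
      have d2: "Wq - w2 = - ((1 - u) *\<^sub>R \<delta>)" by (simp add: zW \<delta>_def algebra_simps)
      have "(th + v) \<bullet> (Wq - w1) = u * A" by (simp add: d1 A_def)
      then have m1: "Cq + u * A \<le> m1" using h1[OF t1] inner_diff_right[of "th + v" Wq w1] by linarith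
      have "(th - v) \<bullet> (Wq - w2) = - ((1 - u) * B)" by (simp add: d2 B_def)
      then have m2: "Cq - (1 - u) * B \<le> m2" using h2[OF t2] inner_diff_right[of "th - v" Wq w2] by linarith
      have "(1 - u) * (Cq + u * A) \<le> (1 - u) * m1" using m1 u by (simp add: mult_left_mono)
      moreover have "u * (Cq - (1 - u) * B) \<le> u * m2" using m2 u by (simp add: mult_left_mono)
      moreover have "u * (1 - u) * (A - B) > 0" using u AB e(1) nd by simp
      ultimately show False using zC by (simp add: algebra_simps)
    qed
  qed
  then show ?thesis using zin unfolding extreme_point_of_def Wq_def Cq_def by blast
qed

lemma sbf: "strongly_bilevel_feasible tl_of hd_of o' d c tol (Wp qs)"
proof -
  have "nonneg (Wp qs)" by (simp add: nonneg_def Wp_nonneg)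
  moreover have "{(Wp qs, Cp qs)} face_of epigraph (gval tl_of hd_of o' d c tol)"
    using extreme by (simp add: face_of_singleton)
  moreover have "(0, 1) \<notin> aff_direction {(Wp qs, Cp qs)}"
    by (simp add: aff_direction_def affine_hull_sing)
  ultimately show ?thesis unfolding strongly_bilevel_feasible_def
    by (intro conjI exI[of _ "{(Wp qs, Cp qs)}"]) auto
qed

lemma main: "\<exists>w t. strongly_bilevel_feasible tl_of hd_of o' d c tol w \<and> cbp_optimal tl_of hd_of o' d c tol w t"
  using sbf cbp by blast

end

theorem theorem3:
  fixes tl_of hd_of :: "'e::finite \<Rightarrow> 'v::finite"
    and c :: "'e \<Rightarrow> real"
    and tol :: "'k::finite \<Rightarrow> 'e"
    and o' d :: 'v
  assumes "\<forall>a. c a \<ge> 0"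
    and "inj tol"
    and "range tol \<noteq> UNIV"
    and "o' \<noteq> d"
    and "tollfree_path tl_of hd_of tol o' d"
  shows "\<exists>w t. strongly_bilevel_feasible tl_of hd_of o' d c tol w \<and>
               cbp_optimal tl_of hd_of o' d c tol w t"
proof -
  interpret npp tl_of hd_of c tol o' d
    using assms by unfold_locales auto
  show ?thesis by (rule main)
qed

end
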